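(* Fix $\lambda\in\mathbb{R}^m$ and $\beta>0$, and let $\theta\mapsto\pi_\theta$ be a differentiable policy parameterization. Then $$\nabla_\theta\mathcal{L}^\beta(\pi_\theta,\lambda)=\sum_{s\in\mathcal{S}}\frac{d^{\pi_\theta}(s)}{1-\gamma}\sum_{a\in\mathcal{A}}Q^{\pi_\theta}_{\Gamma(\pi_\theta)}(s,a)\,\frac{\partial\pi_\theta(a\mid s)}{\partial\theta},$$ where $\Gamma(\pi)=r-\beta\sum_{i=1}^m c_i\min\{V^\pi_{c_i}(\rho)-b_i-\lambda_i/\beta,0\}$ and $Q^\pi_{\Gamma(\pi)}$ is the state-action value function for the (fixed) reward function $\Gamma(\pi)$.
   Context: CMDP: finite $\mathcal{S}$, $\mathcal{A}$; transition kernel $\mathcal{P}$; initial distribution $\rho$; discount $\gamma\in[0,1)$; reward $r:\mathcal{S}\times\mathcal{A}\to[0,1]$; constraint rewards $c_i:\mathcal{S}\times\mathcal{A}\to[0,1]$, thresholds $b_i\ge0$, $i\in[m]$. For bounded $u$, $Q^\pi_u(s,a)=\mathbb{E}[\sum_{\tau\ge0}\gamma^\tau u(s_\tau,a_\tau)\mid s_0=s,a_0=a]$ under $\mathcal{P}$ and $\pi$, $V^\pi_u(s)=\sum_a\pi(a\mid s)Q^\pi_u(s,a)$, $V^\pi_u(\rho)=\sum_s\rho(s)V^\pi_u(s)$. Discounted state visitation distribution: $d^\pi(s)=(1-\gamma)\sum_{s_0}\rho(s_0)\sum_{\tau\ge0}\gamma^\tau\Pr^\pi[s_\tau=s\mid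 s_0]$. Augmented Lagrangian: $\mathcal{L}^\beta(\pi,\lambda)=V^\pi_r(\rho)+\frac{\beta}{2}\sum_i\big(-\min\{V^\pi_{c_i}(\rho)-b_i-\lambda_i/\beta,0\}^2+\lambda_i^2/\beta^2\big)$. *)

theory Defs
  imports "HOL-Analysis.Analysis"
begin

text \<open>Finite CMDP with state type 's and action type 'a (both finite).
  Transition kernel P s a s' = probability of s' after (s,a); policy pol s a = pol(a|s).\<close>

definition is_kernel :: "('s::finite \<Rightarrow> 'a::finite \<Rightarrow> 's \<Rightarrow> real) \<Rightarrow> bool" where
  "is_kernel P \<longleftrightarrow> (\<forall>s a s'. P s a s' \<ge> 0) \<and> (\<forall>s a. (\<Sum>s'\<in>UNIV. P s a s') = 1)"

definition is_distr :: "('s::finite \<Rightarrow> real) \<Rightarrow> bool" where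
  "is_distr \<mu> \<longleftrightarrow> (\<forall>s. \<mu> s \<ge> 0) \<and> (\<Sum>s\<in>UNIV. \<mu> s) = 1"

definition is_policy :: "('s::finite \<Rightarrow> 'a::finite \<Rightarrow> real) \<Rightarrow> bool" where
  "is_policy pol \<longleftrightarrow> (\<forall>s. is_distr (pol s))"

fun sa_dist :: "('s::finite \<Rightarrow> 'a::finite \<Rightarrow> 's \<Rightarrow> real) \<Rightarrow> ('s \<Rightarrow> 'a \<Rightarrow> real)
    \<Rightarrow> 's \<Rightarrow> 'a \<Rightarrow> nat \<Rightarrow> 's \<Rightarrow> 'a \<Rightarrow> real" where
  "sa_dist P pol s a 0 s' a' = (if s' = s \<and> a' = a then 1 else 0)"
| "sa_dist P pol s a (Suc n) s' a' =
     (\<Sum>s''\<in>UNIV. \<Sum>a''\<in>UNIV. sa_dist P pol s a n s'' a'' * P s'' a'' s' * pol s' a')"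

fun s_dist :: "('s::finite \<Rightarrow> 'a::finite \<Rightarrow> 's \<Rightarrow> real) \<Rightarrow> ('s \<Rightarrow> 'a \<Rightarrow> real)
    \<Rightarrow> 's \<Rightarrow> nat \<Rightarrow> 's \<Rightarrow> real" where
  "s_dist P pol s 0 s' = (if s' = s then 1 else 0)"
| "s_dist P pol s (Suc n) s' =
     (\<Sum>s''\<in>UNIV. \<Sum>a\<in>UNIV. s_dist P pol s n s'' * pol s'' a * P s'' a s')"

definition Qf :: "('s::finite \<Rightarrow> 'a::finite \<Rightarrow> 's \<Rightarrow> real) \<Rightarrow> real \<Rightarrow> ('s \<Rightarrow> 'a \<Rightarrow> real)
    \<Rightarrow> ('s \<Rightarrow> 'a \<Rightarrow> real) \<Rightarrow> 's \<Rightarrow> 'a \<Rightarrow> real" where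
  "Qf P \<gamma> pol u s a =
     (\<Sum>\<tau>. \<gamma> ^ \<tau> * (\<Sum>s'\<in>UNIV. \<Sum>a'\<in>UNIV. sa_dist P pol s a \<tau> s' a' * u s' a'))"

definition Vf :: "('s::finite \<Rightarrow> 'a::finite \<Rightarrow> 's \<Rightarrow> real) \<Rightarrow> real \<Rightarrow> ('s \<Rightarrow> 'a \<Rightarrow> real)
    \<Rightarrow> ('s \<Rightarrow> 'a \<Rightarrow> real) \<Rightarrow> 's \<Rightarrow> real" where
  "Vf P \<gamma> pol u s = (\<Sum>a\<in>UNIV. pol s a * Qf P \<gamma> pol u s a)"

definition Vrho :: "('s::finite \<Rightarrow> 'a::finite \<Rightarrow> 's \<Rightarrow> real) \<Rightarrow> real \<Rightarrow> ('s \<Rightarrow> real)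
    \<Rightarrow> ('s \<Rightarrow> 'a \<Rightarrow> real) \<Rightarrow> ('s \<Rightarrow> 'a \<Rightarrow> real) \<Rightarrow> real" where
  "Vrho P \<gamma> \<rho> pol u = (\<Sum>s\<in>UNIV. \<rho> s * Vf P \<gamma> pol u s)"

definition visit :: "('s::finite \<Rightarrow> 'a::finite \<Rightarrow> 's \<Rightarrow> real) \<Rightarrow> real \<Rightarrow> ('s \<Rightarrow> real)
    \<Rightarrow> ('s \<Rightarrow> 'a \<Rightarrow> real) \<Rightarrow> 's \<Rightarrow> real" where
  "visit P \<gamma> \<rho> pol s = (1 - \<gamma>) * (\<Sum>s0\<in>UNIV. \<rho> s0 * (\<Sum>\<tau>. \<gamma> ^ \<tau> * s_dist P pol s0 \<tau> s))"

definition aug_lagr :: "('s::finite \<Rightarrow> 'a::finite \<Rightarrow> 's \<Rightarrow> real) \<Rightarrow> real \<Rightarrow> ('s \<Rightarrow> real)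
    \<Rightarrow> ('s \<Rightarrow> 'a \<Rightarrow> real) \<Rightarrow> nat \<Rightarrow> (nat \<Rightarrow> 's \<Rightarrow> 'a \<Rightarrow> real) \<Rightarrow> (nat \<Rightarrow> real)
    \<Rightarrow> real \<Rightarrow> ('s \<Rightarrow> 'a \<Rightarrow> real) \<Rightarrow> (nat \<Rightarrow> real) \<Rightarrow> real" where
  "aug_lagr P \<gamma> \<rho> r m c b \<beta> pol lam =
     Vrho P \<gamma> \<rho> pol r + \<beta> / 2 * (\<Sum>i<m.
        - (min (Vrho P \<gamma> \<rho> pol (c i) - b i - lam i / \<beta>) 0)\<^sup>2 + (lam i)\<^sup>2 / \<beta>\<^sup>2)"

definition Gam :: "('s::finite \<Rightarrow> 'a::finite \<Rightarrow> 's \<Rightarrow> real) \<Rightarrow> real \<Rightarrow> ('s \<Rightarrow> real)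
    \<Rightarrow> ('s \<Rightarrow> 'a \<Rightarrow> real) \<Rightarrow> nat \<Rightarrow> (nat \<Rightarrow> 's \<Rightarrow> 'a \<Rightarrow> real) \<Rightarrow> (nat \<Rightarrow> real)
    \<Rightarrow> real \<Rightarrow> ('s \<Rightarrow> 'a \<Rightarrow> real) \<Rightarrow> (nat \<Rightarrow> real) \<Rightarrow> 's \<Rightarrow> 'a \<Rightarrow> real" where
  "Gam P \<gamma> \<rho> r m c b \<beta> pol lam = (\<lambda>s a.
     r s a - \<beta> * (\<Sum>i<m. c i s a * min (Vrho P \<gamma> \<rho> pol (c i) - b i - lam i / \<beta>) 0))"

end

theory Submission
  imports Defs
begin


lemma sum_swap3:
  "(\<Sum>i\<in>A. \<Sum>j\<in>B. \<Sum>k\<in>C. f i j k) = (\<Sum>j\<in>B. \<Sum>k\<in>C. \<Sum>i\<in>A. (f i j k :: real))"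
  by (subst sum.swap, rule sum.cong, rule refl, rule sum.swap)

lemma sum_swap4:
  "(\<Sum>i\<in>A. \<Sum>j\<in>B. \<Sum>k\<in>C. \<Sum>l\<in>E. f i j k l) = (\<Sum>k\<in>C. \<Sum>l\<in>E. \<Sum>i\<in>A. \<Sum>j\<in>B. (f i j k l :: real))"
proof -
  have "(\<Sum>i\<in>A. \<Sum>j\<in>B. \<Sum>k\<in>C. \<Sum>l\<in>E. f i j k l) = (\<Sum>i\<in>A. \<Sum>k\<in>C. \<Sum>l\<in>E. \<Sum>j\<in>B. f i j k l)"
    by (rule sum.cong, rule refl, rule sum_swap3)
  also have "\<dots> = (\<Sum>k\<in>C. \<Sum>l\<in>E. \<Sum>i\<in>A. \<Sum>j\<in>B. f i j k l)"
    by (rule sum_swap3)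
  finally show ?thesis .
qed

lemma sum2_delta:
  fixes f :: "'s::finite \<Rightarrow> 'a::finite \<Rightarrow> real"
  shows "(\<Sum>x\<in>UNIV. \<Sum>y\<in>UNIV. if x = s \<and> y = a then f x y else 0) = f s a"
proof -
  have "\<And>x. (\<Sum>y\<in>UNIV. if x = s \<and> y = a then f x y else 0) = (if x = s then f x a else 0)"
    by (auto simp: sum.delta')
  then show ?thesis by (simp add: sum.delta')
qed

lemma sa0_mult: "sa_dist P pol s a 0 x y * X = (if x = s \<and> y = a then X else 0)"
  by simp

lemma sa_first:
  "sa_dist P pol s a (Suc n) s' a' =
    (\<Sum>s1\<in>UNIV. \<Sum>a1\<in>UNIV. P s a s1 * pol s1 a1 * sa_dist P pol s1 a1 n s' a')"
proof (induction n arbitrary: s' a')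
  case 0
  have "sa_dist P pol s a (Suc 0) s' a' = (\<Sum>s''\<in>UNIV. \<Sum>a''\<in>UNIV. if s'' = s \<and> a'' = a then P s'' a'' s' * pol s' a' else 0)"
    by (simp only: sa_dist.simps(2) mult.assoc sa0_mult) (intro sum.cong refl, auto)
  also have "\<dots> = P s a s' * pol s' a'" by (rule sum2_delta)
  also have "\<dots> = (\<Sum>s1\<in>UNIV. \<Sum>a1\<in>UNIV. if s1 = s' \<and> a1 = a' then P s a s1 * pol s1 a1 else 0)"
    by (rule sum2_delta[symmetric])
  also have "\<dots> = (\<Sum>s1\<in>UNIV. \<Sum>a1\<in>UNIV. P s a s1 * pol s1 a1 * sa_dist P pol s1 a1 0 s' a')"
    by (intro sum.cong refl) auto
  finally show ?case .
next
  case (Suc n)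
  have "sa_dist P pol s a (Suc (Suc n)) s' a' =
    (\<Sum>s''\<in>UNIV. \<Sum>a''\<in>UNIV. (\<Sum>s1\<in>UNIV. \<Sum>a1\<in>UNIV. P s a s1 * pol s1 a1 * sa_dist P pol s1 a1 n s'' a'') * P s'' a'' s' * pol s' a')"
    by (subst sa_dist.simps(2)) (simp only: Suc)
  also have "\<dots> = (\<Sum>s''\<in>UNIV. \<Sum>a''\<in>UNIV. \<Sum>s1\<in>UNIV. \<Sum>a1\<in>UNIV. P s a s1 * pol s1 a1 * (sa_dist P pol s1 a1 n s'' a'' * P s'' a'' s' * pol s' a'))"
    by (simp add: sum_distrib_left sum_distrib_right ac_simps)
  also have "\<dots> = (\<Sum>s1\<in>UNIV. \<Sum>a1\<in>UNIV. \<Sum>s''\<in>UNIV. \<Sum>a''\<in>UNIV. P s a s1 * pol s1 a1 * (sa_dist P pol s1 a1 n s'' a'' * P s'' a'' s' * pol s' a'))"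
    by (rule sum_swap4)
  also have "\<dots> = (\<Sum>s1\<in>UNIV. \<Sum>a1\<in>UNIV. P s a s1 * pol s1 a1 *
      (\<Sum>s''\<in>UNIV. \<Sum>a''\<in>UNIV. sa_dist P pol s1 a1 n s'' a'' * P s'' a'' s' * pol s' a'))"
    by (simp add: sum_distrib_left)
  finally show ?case by simp
qed

lemma sa_sd:
  "(\<Sum>a0\<in>UNIV. pol s0 a0 * sa_dist P pol s0 a0 n s' a') = s_dist P pol s0 n s' * pol s' a'"
proof (induction n arbitrary: s' a')
  case 0
  show ?case by (simp add: if_distrib sum.delta cong: if_cong)
next
  case (Suc n)
  have "(\<Sum>a0\<in>UNIV. pol s0 a0 * sa_dist P pol s0 a0 (Suc n) s' a') =
     (\<Sum>a0\<in>UNIV. \<Sum>s''\<in>UNIV. \<Sum>a''\<in>UNIV. pol s0 a0 * sa_dist P pol s0 a0 n s'' a'' * P s'' a'' s' * pol s' a')"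
    by (simp add: sum_distrib_left ac_simps)
  also have "\<dots> = (\<Sum>s''\<in>UNIV. \<Sum>a''\<in>UNIV. \<Sum>a0\<in>UNIV. pol s0 a0 * sa_dist P pol s0 a0 n s'' a'' * P s'' a'' s' * pol s' a')"
    by (rule sum_swap3)
  also have "\<dots> = (\<Sum>s''\<in>UNIV. \<Sum>a''\<in>UNIV. (\<Sum>a0\<in>UNIV. pol s0 a0 * sa_dist P pol s0 a0 n s'' a'') * P s'' a'' s' * pol s' a')"
    by (simp add: sum_distrib_right)
  also have "\<dots> = s_dist P pol s0 (Suc n) s' * pol s' a'"
    by (simp add: Suc sum_distrib_left sum_distrib_right ac_simps)
  finally show ?case .
qed

lemma sa_nonneg:
  assumes "is_kernel P" "is_policy pol"
  shows "0 \<le> sa_dist P pol s a n s' a'"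
  using assms by (induction n arbitrary: s' a')
     (auto simp: is_kernel_def is_policy_def is_distr_def intro!: sum_nonneg mult_nonneg_nonneg)

lemma sa_sum1:
  assumes "is_kernel P" "is_policy pol"
  shows "(\<Sum>s'\<in>UNIV. \<Sum>a'\<in>UNIV. sa_dist P pol s a n s' a') = 1"
proof (induction n)
  case 0
  show ?case using sum2_delta[of s a "\<lambda>_ _. 1::real"] by simp
next
  case (Suc n)
  have "(\<Sum>s'\<in>UNIV. \<Sum>a'\<in>UNIV. sa_dist P pol s a (Suc n) s' a') =
     (\<Sum>s'\<in>UNIV. \<Sum>a'\<in>UNIV. \<Sum>s''\<in>UNIV. \<Sum>a''\<in>UNIV. sa_dist P pol s a n s'' a'' * (P s'' a'' s' * pol s' a'))"
    by (simp add: ac_simps)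
  also have "\<dots> = (\<Sum>s''\<in>UNIV. \<Sum>a''\<in>UNIV. \<Sum>s'\<in>UNIV. \<Sum>a'\<in>UNIV. sa_dist P pol s a n s'' a'' * (P s'' a'' s' * pol s' a'))"
    by (rule sum_swap4)
  also have "\<dots> = (\<Sum>s''\<in>UNIV. \<Sum>a''\<in>UNIV. sa_dist P pol s a n s'' a'' * (\<Sum>s'\<in>UNIV. P s'' a'' s' * (\<Sum>a'\<in>UNIV. pol s' a')))"
    by (simp add: sum_distrib_left)
  also have "\<dots> = 1" using assms Suc
    by (simp add: is_kernel_def is_policy_def is_distr_def)
  finally show ?case .
qed

lemma sd_nonneg:
  assumes "is_kernel P" "is_policy pol"
  shows "0 \<le> s_dist P pol s n s'"
  using assms by (induction n arbitrary: s')
     (auto simp: is_kernel_def is_policy_def is_distr_def intro!: sum_nonneg mult_nonneg_nonneg)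

lemma sd_sum1:
  assumes "is_kernel P" "is_policy pol"
  shows "(\<Sum>s'\<in>UNIV. s_dist P pol s n s') = 1"
proof (induction n)
  case 0
  show ?case by (simp add: sum.delta')
next
  case (Suc n)
  have "(\<Sum>s'\<in>UNIV. s_dist P pol s (Suc n) s') =
     (\<Sum>s'\<in>UNIV. \<Sum>s''\<in>UNIV. \<Sum>a\<in>UNIV. s_dist P pol s n s'' * (pol s'' a * P s'' a s'))"
    by (simp add: ac_simps)
  also have "\<dots> = (\<Sum>s''\<in>UNIV. \<Sum>a\<in>UNIV. \<Sum>s'\<in>UNIV. s_dist P pol s n s'' * (pol s'' a * P s'' a s'))"
    by (rule sum_swap3)
  also have "\<dots> = (\<Sum>s''\<in>UNIV. s_dist P pol s n s'' * (\<Sum>a\<in>UNIV. pol s'' a * (\<Sum>s'\<in>UNIV. P s'' a s')))"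
    by (simp add: sum_distrib_left)
  also have "\<dots> = 1" using assms Suc
    by (simp add: is_kernel_def is_policy_def is_distr_def)
  finally show ?case .
qed


definition Ed :: "('s::finite \<Rightarrow> 'a::finite \<Rightarrow> 's \<Rightarrow> real) \<Rightarrow> ('s \<Rightarrow> 'a \<Rightarrow> real)
    \<Rightarrow> ('s \<Rightarrow> 'a \<Rightarrow> real) \<Rightarrow> 's \<Rightarrow> 'a \<Rightarrow> nat \<Rightarrow> real" where
  "Ed P pol u s a \<tau> = (\<Sum>s'\<in>UNIV. \<Sum>a'\<in>UNIV. sa_dist P pol s a \<tau> s' a' * u s' a')"

definition Tq :: "('s::finite \<Rightarrow> 'a::finite \<Rightarrow> 's \<Rightarrow> real) \<Rightarrow> ('s \<Rightarrow> 'a \<Rightarrow> real)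
    \<Rightarrow> ('s \<Rightarrow> 'a \<Rightarrow> real) \<Rightarrow> 's \<Rightarrow> 'a \<Rightarrow> real" where
  "Tq P pol q s a = (\<Sum>s1\<in>UNIV. P s a s1 * (\<Sum>a1\<in>UNIV. pol s1 a1 * q s1 a1))"

definition bnd :: "('s::finite \<Rightarrow> 'a::finite \<Rightarrow> real) \<Rightarrow> real" where
  "bnd u = (\<Sum>s\<in>UNIV. \<Sum>a\<in>UNIV. \<bar>u s a\<bar>)"

lemma le_bnd: "\<bar>u s a\<bar> \<le> bnd u"
proof -
  have "\<bar>u s a\<bar> \<le> (\<Sum>a\<in>UNIV. \<bar>u s a\<bar>)" by (rule member_le_sum) auto
  also have "\<dots> \<le> bnd u" unfolding bnd_def by (rule member_le_sum) (auto intro: sum_nonneg)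
  finally show ?thesis .
qed

lemma Qf_eq: "Qf P \<gamma> pol u s a = (\<Sum>\<tau>. \<gamma> ^ \<tau> * Ed P pol u s a \<tau>)"
  by (simp add: Qf_def Ed_def)

lemma Ed_bound:
  assumes "is_kernel P" "is_policy pol" "\<forall>s a. \<bar>u s a\<bar> \<le> B"
  shows "\<bar>Ed P pol u s a \<tau>\<bar> \<le> B"
proof -
  have "\<bar>Ed P pol u s a \<tau>\<bar> \<le> (\<Sum>s'\<in>UNIV. \<Sum>a'\<in>UNIV. \<bar>sa_dist P pol s a \<tau> s' a' * u s' a'\<bar>)"
    unfolding Ed_def by (rule order.trans[OF sum_abs], rule sum_mono, rule sum_abs)
  also have "\<dots> \<le> (\<Sum>s'\<in>UNIV. \<Sum>a'\<in>UNIV. sa_dist P pol s a \<tau> s' a' * B)"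
    using sa_nonneg[OF assms(1,2)] assms(3)
    by (intro sum_mono) (simp add: abs_mult mult_left_mono)
  also have "\<dots> = B" using sa_sum1[OF assms(1,2)] by (simp add: sum_distrib_right[symmetric])
  finally show ?thesis .
qed

context
  fixes \<gamma> :: real
  assumes g0: "0 \<le> \<gamma>" and g1: "\<gamma> < 1"
begin

lemma geo_summable:
  assumes "\<forall>n. \<bar>X n\<bar> \<le> B"
  shows "summable (\<lambda>n. \<gamma> ^ n * X n)"
proof (rule summable_comparison_test')
  show "summable (\<lambda>n. B * \<gamma> ^ n)" using g0 g1 by (intro summable_mult summable_geometric) simp
  fix n show "norm (\<gamma> ^ n * X n) \<le> B * \<gamma> ^ n" using assms g0
    by (simp add: abs_mult mult.commute) (auto intro!: mult_right_mono)
qed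

lemma geo_bound:
  assumes "\<forall>n. \<bar>X n\<bar> \<le> B"
  shows "\<bar>\<Sum>n. \<gamma> ^ n * X n\<bar> \<le> B / (1 - \<gamma>)"
proof -
  have s1: "summable (\<lambda>n. \<bar>\<gamma> ^ n * X n\<bar>)"
    using geo_summable[of "\<lambda>n. \<bar>X n\<bar>" B] assms g0 by (simp add: abs_mult)
  have s2: "summable (\<lambda>n. B * \<gamma> ^ n)" using g0 g1 by (intro summable_mult summable_geometric) simp
  have "\<bar>\<Sum>n. \<gamma> ^ n * X n\<bar> \<le> (\<Sum>n. \<bar>\<gamma> ^ n * X n\<bar>)" by (rule summable_rabs[OF s1])
  also have "\<dots> \<le> (\<Sum>n. B * \<gamma> ^ n)"
    using assms g0 by (intro suminf_le s1 s2) (simp add: abs_mult mult.commute, auto intro!: mult_right_mono)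
  also have "\<dots> = B / (1 - \<gamma>)" using g0 g1 by (simp add: suminf_mult suminf_geometric)
  finally show ?thesis .
qed

lemma Ed_summable:
  assumes "is_kernel P" "is_policy pol"
  shows "summable (\<lambda>\<tau>. \<gamma> ^ \<tau> * Ed P pol u s a \<tau>)"
  by (rule geo_summable[where B="bnd u"]) (use Ed_bound[OF assms] le_bnd in blast)

lemma Qf_bound:
  assumes "is_kernel P" "is_policy pol" "\<forall>s a. \<bar>u s a\<bar> \<le> B"
  shows "\<bar>Qf P \<gamma> pol u s a\<bar> \<le> B / (1 - \<gamma>)"
  unfolding Qf_eq by (rule geo_bound) (use Ed_bound[OF assms] in blast)

lemma Qf_sum:
  assumes "is_kernel P" "is_policy pol"
  shows "Qf P \<gamma> pol (\<lambda>s a. \<Sum>k\<in>K. w k * f k s a) s a = (\<Sum>k\<in>K. w k * Qf P \<gamma> pol (f k) s a)"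
proof -
  have "\<And>\<tau>. Ed P pol (\<lambda>s a. \<Sum>k\<in>K. w k * f k s a) s a \<tau> = (\<Sum>k\<in>K. w k * Ed P pol (f k) s a \<tau>)"
  proof -
    fix \<tau>
    have "Ed P pol (\<lambda>s a. \<Sum>k\<in>K. w k * f k s a) s a \<tau> =
      (\<Sum>s'\<in>UNIV. \<Sum>a'\<in>UNIV. \<Sum>k\<in>K. w k * (sa_dist P pol s a \<tau> s' a' * f k s' a'))"
      unfolding Ed_def by (simp add: sum_distrib_left ac_simps)
    also have "\<dots> = (\<Sum>k\<in>K. \<Sum>s'\<in>UNIV. \<Sum>a'\<in>UNIV. w k * (sa_dist P pol s a \<tau> s' a' * f k s' a'))"
      by (rule sum_swap3[symmetric])
    also have "\<dots> = (\<Sum>k\<in>K. w k * Ed P pol (f k) s a \<tau>)"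
      unfolding Ed_def by (simp add: sum_distrib_left)
    finally show "Ed P pol (\<lambda>s a. \<Sum>k\<in>K. w k * f k s a) s a \<tau> = (\<Sum>k\<in>K. w k * Ed P pol (f k) s a \<tau>)" .
  qed
  then have "Qf P \<gamma> pol (\<lambda>s a. \<Sum>k\<in>K. w k * f k s a) s a = (\<Sum>\<tau>. \<Sum>k\<in>K. w k * (\<gamma> ^ \<tau> * Ed P pol (f k) s a \<tau>))"
    unfolding Qf_eq by (simp add: sum_distrib_left ac_simps)
  also have "\<dots> = (\<Sum>k\<in>K. \<Sum>\<tau>. w k * (\<gamma> ^ \<tau> * Ed P pol (f k) s a \<tau>))"
    by (rule suminf_sum) (intro summable_mult Ed_summable assms)
  also have "\<dots> = (\<Sum>k\<in>K. w k * Qf P \<gamma> pol (f k) s a)"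
    unfolding Qf_eq by (intro sum.cong refl suminf_mult Ed_summable assms)
  finally show ?thesis .
qed

lemma Qf_lin2:
  assumes "is_kernel P" "is_policy pol"
  shows "Qf P \<gamma> pol (\<lambda>s a. x * u s a + y * v s a) s a = x * Qf P \<gamma> pol u s a + y * Qf P \<gamma> pol v s a"
  using Qf_sum[OF assms, of "\<lambda>k. if k then x else y" "\<lambda>k. if k then u else v" UNIV s a]
  by (simp add: UNIV_bool add.commute)

lemma Ed_Suc:
  "Ed P pol u s a (Suc \<tau>) = (\<Sum>s1\<in>UNIV. \<Sum>a1\<in>UNIV. P s a s1 * pol s1 a1 * Ed P pol u s1 a1 \<tau>)"
proof -
  have "Ed P pol u s a (Suc \<tau>) = (\<Sum>s'\<in>UNIV. \<Sum>a'\<in>UNIV. \<Sum>s1\<in>UNIV. \<Sum>a1\<in>UNIV.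
      P s a s1 * pol s1 a1 * (sa_dist P pol s1 a1 \<tau> s' a' * u s' a'))"
    unfolding Ed_def sa_first by (simp add: sum_distrib_right sum_distrib_left ac_simps)
  also have "\<dots> = (\<Sum>s1\<in>UNIV. \<Sum>a1\<in>UNIV. \<Sum>s'\<in>UNIV. \<Sum>a'\<in>UNIV.
      P s a s1 * pol s1 a1 * (sa_dist P pol s1 a1 \<tau> s' a' * u s' a'))"
    by (rule sum_swap4)
  also have "\<dots> = (\<Sum>s1\<in>UNIV. \<Sum>a1\<in>UNIV. P s a s1 * pol s1 a1 * Ed P pol u s1 a1 \<tau>)"
    unfolding Ed_def by (simp add: sum_distrib_left)
  finally show ?thesis .
qed

lemma bellman:
  assumes "is_kernel P" "is_policy pol"
  shows "Qf P \<gamma> pol u s a = u s a + \<gamma> * Tq P pol (Qf P \<gamma> pol u) s a"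
proof -
  let ?f = "\<lambda>\<tau>. \<gamma> ^ \<tau> * Ed P pol u s a \<tau>"
  have "Qf P \<gamma> pol u s a = ?f 0 + (\<Sum>\<tau>. ?f (Suc \<tau>))"
    unfolding Qf_eq using suminf_split_head[OF Ed_summable[OF assms]] by simp
  also have "?f 0 = u s a" by (simp only: Ed_def sa0_mult sum2_delta power_0 mult_1)
  also have "(\<Sum>\<tau>. ?f (Suc \<tau>)) = (\<Sum>\<tau>. \<Sum>s1\<in>UNIV. \<Sum>a1\<in>UNIV. \<gamma> * (P s a s1 * pol s1 a1) * (\<gamma> ^ \<tau> * Ed P pol u s1 a1 \<tau>))"
    by (simp add: Ed_Suc sum_distrib_left ac_simps)
  also have "\<dots> = (\<Sum>s1\<in>UNIV. \<Sum>a1\<in>UNIV. \<Sum>\<tau>. \<gamma> * (P s a s1 * pol s1 a1) * (\<gamma> ^ \<tau> * Ed P pol u s1 a1 \<tau>))"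
  proof -
    have "(\<Sum>\<tau>. \<Sum>s1\<in>UNIV. \<Sum>a1\<in>UNIV. \<gamma> * (P s a s1 * pol s1 a1) * (\<gamma> ^ \<tau> * Ed P pol u s1 a1 \<tau>))
       = (\<Sum>s1\<in>UNIV. \<Sum>\<tau>. \<Sum>a1\<in>UNIV. \<gamma> * (P s a s1 * pol s1 a1) * (\<gamma> ^ \<tau> * Ed P pol u s1 a1 \<tau>))"
      by (rule suminf_sum) (intro summable_sum summable_mult Ed_summable assms)
    also have "\<dots> = (\<Sum>s1\<in>UNIV. \<Sum>a1\<in>UNIV. \<Sum>\<tau>. \<gamma> * (P s a s1 * pol s1 a1) * (\<gamma> ^ \<tau> * Ed P pol u s1 a1 \<tau>))"
      by (intro sum.cong refl suminf_sum summable_mult Ed_summable assms)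
    finally show ?thesis .
  qed
  also have "\<dots> = (\<Sum>s1\<in>UNIV. \<Sum>a1\<in>UNIV. \<gamma> * (P s a s1 * pol s1 a1) * Qf P \<gamma> pol u s1 a1)"
    unfolding Qf_eq by (intro sum.cong refl suminf_mult Ed_summable assms)
  also have "\<dots> = \<gamma> * Tq P pol (Qf P \<gamma> pol u) s a"
    by (simp add: Tq_def sum_distrib_left ac_simps)
  finally show ?thesis .
qed

end


lemma Tq_bound:
  assumes "is_kernel P" "is_policy pol" "\<forall>s a. \<bar>q s a\<bar> \<le> M"
  shows "\<bar>Tq P pol q s a\<bar> \<le> M"
proof -
  have "\<bar>Tq P pol q s a\<bar> \<le> (\<Sum>s1\<in>UNIV. P s a s1 * (\<Sum>a1\<in>UNIV. pol s1 a1 * M))"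
    unfolding Tq_def
  proof (rule order.trans[OF sum_abs], rule sum_mono)
    fix s1
    have "\<bar>\<Sum>a1\<in>UNIV. pol s1 a1 * q s1 a1\<bar> \<le> (\<Sum>a1\<in>UNIV. pol s1 a1 * M)"
    proof (rule order.trans[OF sum_abs], rule sum_mono)
      fix a1 show "\<bar>pol s1 a1 * q s1 a1\<bar> \<le> pol s1 a1 * M"
        using assms by (auto simp: abs_mult is_policy_def is_distr_def intro!: mult_left_mono)
    qed
    then show "\<bar>P s a s1 * (\<Sum>a1\<in>UNIV. pol s1 a1 * q s1 a1)\<bar> \<le> P s a s1 * (\<Sum>a1\<in>UNIV. pol s1 a1 * M)"
      using assms by (auto simp: abs_mult is_kernel_def intro!: mult_left_mono)
  qed
  also have "\<dots> = M" using assms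
    by (simp add: is_kernel_def is_policy_def is_distr_def sum_distrib_right[symmetric])
  finally show ?thesis .
qed

lemma Tq_lin:
  "Tq P pol (\<lambda>s a. x s a - y s a - g * z s a) s a = Tq P pol x s a - Tq P pol y s a - g * Tq P pol z s a"
  unfolding Tq_def by (simp add: sum_subtractf sum_distrib_left sum.distrib algebra_simps)

context
  fixes \<gamma> :: real
  assumes g0: "0 \<le> \<gamma>" and g1: "\<gamma> < 1"
begin

lemma fix_zero:
  assumes "is_kernel P" "is_policy pol" "\<forall>s a. d s a = \<gamma> * Tq P pol d s a"
  shows "d s a = 0"
proof -
  define M where "M = Max ((\<lambda>x. \<bar>d (fst x) (snd x)\<bar>) ` UNIV)"
  have Mge: "\<forall>s a. \<bar>d s a\<bar> \<le> M"
  proof (intro allI)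
    fix s a
    have "\<bar>d s a\<bar> = (\<lambda>x. \<bar>d (fst x) (snd x)\<bar>) (s, a)" by simp
    also have "\<dots> \<le> M" unfolding M_def by (rule Max_ge) (simp, rule image_eqI[where x="(s, a)"], auto)
    finally show "\<bar>d s a\<bar> \<le> M" .
  qed
  have "M \<in> ((\<lambda>x. \<bar>d (fst x) (snd x)\<bar>) ` UNIV)" unfolding M_def by (intro Max_in) auto
  then obtain s0 a0 where M0: "M = \<bar>d s0 a0\<bar>" by auto
  have "M \<le> \<gamma> * M" unfolding M0 using assms(3) Tq_bound[OF assms(1,2) Mge, of s0 a0] g0
    by (metis M0 abs_mult abs_of_nonneg mult_left_mono)
  then have "M \<le> 0" using g1 by (metis mult_le_cancel_right1 not_le)
  then show ?thesis using Mge by (meson abs_le_zero_iff order.trans)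
qed

lemma resolvent:
  assumes "is_kernel P" "is_policy pol1" "is_policy pol0"
  shows "Qf P \<gamma> pol1 u s a - Qf P \<gamma> pol0 u s a =
    \<gamma> * Qf P \<gamma> pol1 (\<lambda>s a. Tq P pol1 (Qf P \<gamma> pol0 u) s a - Tq P pol0 (Qf P \<gamma> pol0 u) s a) s a"
proof -
  let ?Q1 = "Qf P \<gamma> pol1 u" and ?Q0 = "Qf P \<gamma> pol0 u"
  let ?w = "\<lambda>s a. Tq P pol1 ?Q0 s a - Tq P pol0 ?Q0 s a"
  let ?Qw = "Qf P \<gamma> pol1 ?w"
  define d where "d s a = ?Q1 s a - ?Q0 s a - \<gamma> * ?Qw s a" for s a
  have "\<forall>s a. d s a = \<gamma> * Tq P pol1 d s a"
  proof (intro allI)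
    fix s a
    have "d s a = (u s a + \<gamma> * Tq P pol1 ?Q1 s a) - (u s a + \<gamma> * Tq P pol0 ?Q0 s a)
        - \<gamma> * (?w s a + \<gamma> * Tq P pol1 ?Qw s a)"
      unfolding d_def
      using bellman[OF g0 g1 assms(1,2), of u s a] bellman[OF g0 g1 assms(1,3), of u s a]
        bellman[OF g0 g1 assms(1,2), of ?w s a] by simp
    also have "\<dots> = \<gamma> * (Tq P pol1 ?Q1 s a - Tq P pol1 ?Q0 s a - \<gamma> * Tq P pol1 ?Qw s a)"
      by (simp add: algebra_simps)
    also have "\<dots> = \<gamma> * Tq P pol1 d s a"
      unfolding d_def Tq_lin ..
    finally show "d s a = \<gamma> * Tq P pol1 d s a" .
  qed
  then have "d s a = 0" by (rule fix_zero[OF assms(1,2)])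
  then show ?thesis unfolding d_def by simp
qed

end


lemma vanish_mult:
  fixes g h :: "'p::real_normed_vector \<Rightarrow> real"
  assumes gc: "continuous (at x) g" and hd: "(h has_derivative h') (at x)" and h0: "h x = 0"
  shows "((\<lambda>t. g t * h t) has_derivative (\<lambda>v. g x * h' v)) (at x)"
proof -
  have bl: "bounded_linear h'" using hd by (rule has_derivative_bounded_linear)
  obtain K where K: "\<forall>v. norm (h' v) \<le> norm v * K" using bounded_linear.pos_bounded[OF bl] by blast
  define R where "R y = norm (h y - h x - h' (y - x)) / norm (y - x)" for y
  have R0: "(R \<longlongrightarrow> 0) (at x)" using hd unfolding has_derivative_iff_norm R_def by simp
  have gl: "((\<lambda>y. g y - g x) \<longlongrightarrow> 0) (at x)" using gc unfolding continuous_at by (rule LIM_zero)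
  have "((\<lambda>y. \<bar>g x\<bar> * R y + \<bar>g y - g x\<bar> * (R y + K)) \<longlongrightarrow> \<bar>g x\<bar> * 0 + 0 * (0 + K)) (at x)"
    by (intro tendsto_intros R0 tendsto_rabs_zero gl)
  then have B: "((\<lambda>y. \<bar>g x\<bar> * R y + \<bar>g y - g x\<bar> * (R y + K)) \<longlongrightarrow> 0) (at x)" by simp
  have bl2: "bounded_linear (\<lambda>v. g x * h' v)"
    using has_derivative_bounded_linear[OF has_derivative_mult_right[OF hd, of "g x"]] .
  have pw: "norm ((g y * h y - g x * h x) - g x * h' (y - x)) / norm (y - x)
      \<le> \<bar>g x\<bar> * R y + \<bar>g y - g x\<bar> * (R y + K)" for y
  proof (cases "y = x")
    case True then show ?thesis by (simp add: R_def)
  next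
    case False
    let ?N = "\<bar>h y - h x - h' (y - x)\<bar>"
    let ?n = "norm (y - x)"
    have npos: "?n > 0" using False by simp
    have eq: "(g y * h y - g x * h x) - g x * h' (y - x) = g x * (h y - h x - h' (y - x)) + (g y - g x) * h y"
      using h0 by (simp add: algebra_simps)
    have hy: "\<bar>h y\<bar> \<le> ?N + K * ?n"
    proof -
      have "\<bar>h y\<bar> = \<bar>(h y - h x - h' (y - x)) + h' (y - x)\<bar>" using h0 by simp
      also have "\<dots> \<le> ?N + \<bar>h' (y - x)\<bar>" by (rule abs_triangle_ineq)
      also have "\<bar>h' (y - x)\<bar> \<le> K * ?n" using K[rule_format, of "y - x"] by (simp add: mult.commute)
      finally show ?thesis by simp
    qed
    have "\<bar>(g y * h y - g x * h x) - g x * h' (y - x)\<bar> \<le> \<bar>g x\<bar> * ?N + \<bar>g y - g x\<bar> * \<bar>h y\<bar>"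
      unfolding eq by (rule order.trans[OF abs_triangle_ineq]) (simp add: abs_mult)
    also have "\<dots> \<le> \<bar>g x\<bar> * ?N + \<bar>g y - g x\<bar> * (?N + K * ?n)"
      by (intro add_left_mono mult_left_mono hy) simp
    finally have num: "\<bar>(g y * h y - g x * h x) - g x * h' (y - x)\<bar> \<le> \<bar>g x\<bar> * ?N + \<bar>g y - g x\<bar> * (?N + K * ?n)" .
    have "norm ((g y * h y - g x * h x) - g x * h' (y - x)) / ?n \<le> (\<bar>g x\<bar> * ?N + \<bar>g y - g x\<bar> * (?N + K * ?n)) / ?n"
      using num npos by (simp add: divide_right_mono)
    also have "\<dots> = \<bar>g x\<bar> * R y + \<bar>g y - g x\<bar> * (R y + K)"
      using npos by (simp add: R_def field_simps)
    finally show ?thesis .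
  qed
  show ?thesis unfolding has_derivative_iff_norm
  proof (intro conjI bl2)
    show "((\<lambda>y. norm ((g y * h y - g x * h x) - g x * h' (y - x)) / norm (y - x)) \<longlongrightarrow> 0) (at x)"
    proof (rule Lim_null_comparison[OF _ B])
      show "\<forall>\<^sub>F y in at x. norm (norm ((g y * h y - g x * h x) - g x * h' (y - x)) / norm (y - x))
          \<le> \<bar>g x\<bar> * R y + \<bar>g y - g x\<bar> * (R y + K)"
        using pw by (intro always_eventually allI) simp
    qed
  qed
qed

lemma minsq_bound:
  fixes x y :: real
  shows "\<bar>(min y 0)\<^sup>2 - (min x 0)\<^sup>2 - 2 * min x 0 * (y - x)\<bar> \<le> (y - x)\<^sup>2"
proof (cases "y \<le> 0"; cases "x \<le> 0")
  assume "y \<le> 0" "x \<le> 0"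
  then have "(min y 0)\<^sup>2 - (min x 0)\<^sup>2 - 2 * min x 0 * (y - x) = (y - x)\<^sup>2"
    by (simp add: power2_eq_square algebra_simps)
  then show ?thesis by simp
next
  assume a: "y \<le> 0" "\<not> x \<le> 0"
  have "0 \<le> - (x * y)" using a by (simp add: mult_nonneg_nonpos)
  then show ?thesis using a by (simp add: power2_eq_square algebra_simps)
next
  assume a: "\<not> y \<le> 0" "x \<le> 0"
  have "0 \<le> - (x * y)" using a by (simp add: mult_nonpos_nonneg)
  moreover have "0 \<le> x * x" "0 \<le> y * y" by simp_all
  moreover have e: "x * (y * 2) = 2 * (x * y)" by simp
  ultimately have "0 \<le> x * x - x * (y * 2)" by linarith
  then have "\<bar>x * x - x * (y * 2)\<bar> = x * x - x * (y * 2)" by simp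
  then show ?thesis using a \<open>0 \<le> y * y\<close> by (simp add: power2_eq_square algebra_simps)
next
  assume "\<not> y \<le> 0" "\<not> x \<le> 0" then show ?thesis by simp
qed

lemma minsq_deriv:
  "((\<lambda>y::real. (min y 0)\<^sup>2) has_derivative (\<lambda>h. 2 * min x 0 * h)) (at x)"
  unfolding has_derivative_iff_norm
proof (intro conjI)
  show "bounded_linear (\<lambda>h. 2 * min x 0 * h)" by (rule bounded_linear_mult_right)
  have "((\<lambda>y. \<bar>y - x\<bar>) \<longlongrightarrow> \<bar>x - x\<bar>) (at x)" by (intro tendsto_intros)
  then have L: "((\<lambda>y. \<bar>y - x\<bar>) \<longlongrightarrow> 0) (at x)" by simp
  show "((\<lambda>y. norm ((min y 0)\<^sup>2 - (min x 0)\<^sup>2 - 2 * min x 0 * (y - x)) / norm (y - x)) \<longlongrightarrow> 0) (at x)"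
  proof (rule Lim_null_comparison[OF _ L], intro always_eventually allI)
    fix y :: real
    show "norm (norm ((min y 0)\<^sup>2 - (min x 0)\<^sup>2 - 2 * min x 0 * (y - x)) / norm (y - x)) \<le> \<bar>y - x\<bar>"
    proof (cases "y = x")
      case True then show ?thesis by simp
    next
      case False
      then have p: "\<bar>y - x\<bar> > 0" by simp
      have "\<bar>(min y 0)\<^sup>2 - (min x 0)\<^sup>2 - 2 * min x 0 * (y - x)\<bar> \<le> \<bar>y - x\<bar> * \<bar>y - x\<bar>"
        using minsq_bound[of y x] by (simp add: power2_eq_square abs_mult[symmetric])
      then show ?thesis using p by (simp add: divide_le_eq)
    qed
  qed
qed


lemma Qf_expand:
  assumes "is_kernel P" "is_policy pol" "0 \<le> \<gamma>" "\<gamma> < 1"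
  shows "Qf P \<gamma> pol w s a = (\<Sum>k\<in>UNIV. w (fst k) (snd k) * Qf P \<gamma> pol (\<lambda>x y. if (x, y) = k then 1 else 0) s a)"
proof -
  have "\<And>x y. (\<Sum>k\<in>UNIV. w (fst k) (snd k) * (if (x, y) = k then 1 else 0)) = w x y"
  proof -
    fix x y
    have "(\<Sum>k\<in>UNIV. w (fst k) (snd k) * (if (x, y) = k then 1 else 0)) = (\<Sum>k\<in>UNIV. if (x, y) = k then w (fst k) (snd k) else 0)"
      by (intro sum.cong) auto
    also have "\<dots> = w x y" by (simp add: sum.delta)
    finally show "(\<Sum>k\<in>UNIV. w (fst k) (snd k) * (if (x, y) = k then 1 else 0)) = w x y" .
  qed
  then have "w = (\<lambda>x y. \<Sum>k\<in>UNIV. w (fst k) (snd k) * (\<lambda>k x y. if (x, y) = k then 1 else 0) k x y)" by simp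
  then have "Qf P \<gamma> pol w s a = Qf P \<gamma> pol (\<lambda>x y. \<Sum>k\<in>UNIV. w (fst k) (snd k) * (\<lambda>k x y. if (x, y) = k then 1 else 0) k x y) s a"
    by metis
  also have "\<dots> = (\<Sum>k\<in>UNIV. w (fst k) (snd k) * Qf P \<gamma> pol (\<lambda>x y. if (x, y) = k then 1 else 0) s a)"
    by (rule Qf_sum[OF assms(3,4,1,2)])
  finally show ?thesis .
qed

context
  fixes P :: "'s::finite \<Rightarrow> 'a::finite \<Rightarrow> 's \<Rightarrow> real" and \<gamma> :: real
    and pol :: "'p::euclidean_space \<Rightarrow> 's \<Rightarrow> 'a \<Rightarrow> real"
    and D :: "'s \<Rightarrow> 'a \<Rightarrow> 'p \<Rightarrow> real" and \<theta> :: 'p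
  assumes kP: "is_kernel P" and g0: "0 \<le> \<gamma>" and g1: "\<gamma> < 1"
    and pp: "\<forall>t. is_policy (pol t)"
    and dp: "\<forall>s a. ((\<lambda>t. pol t s a) has_derivative D s a) (at \<theta>)"
begin

lemma pol_tendsto: "((\<lambda>t. pol t s a) \<longlongrightarrow> pol \<theta> s a) (at \<theta>)"
  using has_derivative_continuous[OF dp[rule_format, of s a]] unfolding continuous_at .

lemma Tq_tendsto: "((\<lambda>t. Tq P (pol t) g x y) \<longlongrightarrow> Tq P (pol \<theta>) g x y) (at \<theta>)"
  unfolding Tq_def by (intro tendsto_intros pol_tendsto)

lemma Tq_deriv: "((\<lambda>t. Tq P (pol t) g x y) has_derivative (\<lambda>h. Tq P (\<lambda>s1 a1. D s1 a1 h) g x y)) (at \<theta>)"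
  unfolding Tq_def by (intro has_derivative_sum has_derivative_mult_right has_derivative_mult_left dp[rule_format])

lemma G_cont: "continuous (at \<theta>) (\<lambda>t. Qf P \<gamma> (pol t) f s a)"
proof -
  let ?g = "Qf P \<gamma> (pol \<theta>) f"
  define w where "w t x y = Tq P (pol t) ?g x y - Tq P (pol \<theta>) ?g x y" for t x y
  have res: "Qf P \<gamma> (pol t) f s a - Qf P \<gamma> (pol \<theta>) f s a = \<gamma> * Qf P \<gamma> (pol t) (w t) s a" for t
    unfolding w_def using resolvent[OF g0 g1 kP pp[rule_format] pp[rule_format]] by blast
  have bd: "\<bar>Qf P \<gamma> (pol t) f s a - Qf P \<gamma> (pol \<theta>) f s a\<bar> \<le> \<gamma> * (bnd (w t) / (1 - \<gamma>))" for t
  proof -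
    have "\<bar>Qf P \<gamma> (pol t) (w t) s a\<bar> \<le> bnd (w t) / (1 - \<gamma>)"
      by (rule Qf_bound[OF g0 g1 kP pp[rule_format]]) (simp add: le_bnd)
    then show ?thesis unfolding res abs_mult abs_of_nonneg[OF g0] by (rule mult_left_mono[OF _ g0])
  qed
  have "((\<lambda>t. bnd (w t)) \<longlongrightarrow> bnd (w \<theta>)) (at \<theta>)"
    unfolding bnd_def w_def by (intro tendsto_intros Tq_tendsto)
  then have "((\<lambda>t. \<gamma> * (bnd (w t) / (1 - \<gamma>))) \<longlongrightarrow> \<gamma> * (0 / (1 - \<gamma>))) (at \<theta>)"
    unfolding w_def bnd_def by (intro tendsto_intros) (use g1 in auto)
  then have L: "((\<lambda>t. \<gamma> * (bnd (w t) / (1 - \<gamma>))) \<longlongrightarrow> 0) (at \<theta>)" by simp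
  have "((\<lambda>t. Qf P \<gamma> (pol t) f s a - Qf P \<gamma> (pol \<theta>) f s a) \<longlongrightarrow> 0) (at \<theta>)"
    by (rule Lim_null_comparison[OF _ L]) (use bd in \<open>intro always_eventually allI, simp\<close>)
  then show ?thesis unfolding continuous_at by (rule LIM_zero_cancel)
qed


lemma Q_deriv:
  "((\<lambda>t. Qf P \<gamma> (pol t) u s a) has_derivative
     (\<lambda>h. \<gamma> * Qf P \<gamma> (pol \<theta>) (\<lambda>x y. Tq P (\<lambda>s1 a1. D s1 a1 h) (Qf P \<gamma> (pol \<theta>) u) x y) s a)) (at \<theta>)"
proof -
  let ?q = "Qf P \<gamma> (pol \<theta>) u"
  define Dl where "Dl t k = Tq P (pol t) ?q (fst k) (snd k) - Tq P (pol \<theta>) ?q (fst k) (snd k)" for t k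
  define G where "G t k = Qf P \<gamma> (pol t) (\<lambda>x y. if (x, y) = k then 1 else 0) s a" for t k
  have eq: "Qf P \<gamma> (pol t) u s a = ?q s a + \<gamma> * (\<Sum>k\<in>UNIV. G t k * Dl t k)" for t
  proof -
    have "Qf P \<gamma> (pol t) u s a - ?q s a =
       \<gamma> * Qf P \<gamma> (pol t) (\<lambda>x y. Tq P (pol t) ?q x y - Tq P (pol \<theta>) ?q x y) s a"
      by (rule resolvent[OF g0 g1 kP pp[rule_format] pp[rule_format]])
    also have "Qf P \<gamma> (pol t) (\<lambda>x y. Tq P (pol t) ?q x y - Tq P (pol \<theta>) ?q x y) s a = (\<Sum>k\<in>UNIV. G t k * Dl t k)"
      unfolding G_def Dl_def by (subst Qf_expand[OF kP pp[rule_format] g0 g1]) (simp add: mult.commute)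
    finally show ?thesis by simp
  qed
  have Dl0: "Dl \<theta> k = 0" for k unfolding Dl_def by simp
  have dDl: "((\<lambda>t. Dl t k) has_derivative (\<lambda>h. Tq P (\<lambda>s1 a1. D s1 a1 h) ?q (fst k) (snd k) - 0)) (at \<theta>)" for k
    unfolding Dl_def by (intro has_derivative_diff Tq_deriv has_derivative_const)
  have d: "((\<lambda>t. ?q s a + \<gamma> * (\<Sum>k\<in>UNIV. G t k * Dl t k)) has_derivative
      (\<lambda>h. 0 + \<gamma> * (\<Sum>k\<in>UNIV. G \<theta> k * (Tq P (\<lambda>s1 a1. D s1 a1 h) ?q (fst k) (snd k) - 0)))) (at \<theta>)"
  proof (rule has_derivative_add[OF has_derivative_const], rule has_derivative_mult_right, rule has_derivative_sum)
    fix k :: "'s \<times> 'a"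
    show "((\<lambda>t. G t k * Dl t k) has_derivative (\<lambda>h. G \<theta> k * (Tq P (\<lambda>s1 a1. D s1 a1 h) ?q (fst k) (snd k) - 0))) (at \<theta>)"
      by (rule vanish_mult[OF _ dDl Dl0]) (unfold G_def, rule G_cont)
  qed
  have e2: "(\<lambda>h. 0 + \<gamma> * (\<Sum>k\<in>UNIV. G \<theta> k * (Tq P (\<lambda>s1 a1. D s1 a1 h) ?q (fst k) (snd k) - 0))) =
     (\<lambda>h. \<gamma> * Qf P \<gamma> (pol \<theta>) (\<lambda>x y. Tq P (\<lambda>s1 a1. D s1 a1 h) ?q x y) s a)"
    unfolding G_def by (subst Qf_expand[OF kP pp[rule_format] g0 g1]) (simp add: mult.commute)
  have fe: "(\<lambda>t. Qf P \<gamma> (pol t) u s a) = (\<lambda>t. ?q s a + \<gamma> * (\<Sum>k\<in>UNIV. G t k * Dl t k))"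
    by (intro ext eq)
  show ?thesis unfolding fe e2[symmetric] by (rule d)
qed

end


lemma sd_le1:
  assumes "is_kernel P" "is_policy pol"
  shows "s_dist P pol s n s' \<le> 1"
proof -
  have "s_dist P pol s n s' \<le> (\<Sum>s'\<in>UNIV. s_dist P pol s n s')"
    by (rule member_le_sum) (auto intro: sd_nonneg[OF assms])
  then show ?thesis using sd_sum1[OF assms] by simp
qed

lemma sd_phi_bound:
  assumes "is_kernel P" "is_policy pol"
  shows "\<bar>\<Sum>s'\<in>UNIV. s_dist P pol s0 n s' * \<phi> s'\<bar> \<le> (\<Sum>s'\<in>UNIV. \<bar>\<phi> s'\<bar>)"
proof (rule order.trans[OF sum_abs], rule sum_mono)
  fix s'
  have "\<bar>s_dist P pol s0 n s' * \<phi> s'\<bar> = s_dist P pol s0 n s' * \<bar>\<phi> s'\<bar>"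
    using sd_nonneg[OF assms] by (simp add: abs_mult)
  also have "\<dots> \<le> 1 * \<bar>\<phi> s'\<bar>" by (rule mult_right_mono[OF sd_le1[OF assms]]) simp
  finally show "\<bar>s_dist P pol s0 n s' * \<phi> s'\<bar> \<le> \<bar>\<phi> s'\<bar>" by simp
qed

lemma aux1:
  assumes "is_kernel P" "is_policy pol" "0 \<le> \<gamma>" "\<gamma> < 1"
  shows "(\<Sum>a\<in>UNIV. pol s0 a * Qf P \<gamma> pol w s0 a) =
    (\<Sum>\<tau>. \<gamma> ^ \<tau> * (\<Sum>s'\<in>UNIV. s_dist P pol s0 \<tau> s' * (\<Sum>a'\<in>UNIV. pol s' a' * w s' a')))"
proof -
  have "(\<Sum>a\<in>UNIV. pol s0 a * Qf P \<gamma> pol w s0 a) = (\<Sum>a\<in>UNIV. \<Sum>\<tau>. pol s0 a * (\<gamma> ^ \<tau> * Ed P pol w s0 a \<tau>))"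
    unfolding Qf_eq by (intro sum.cong refl suminf_mult[symmetric] Ed_summable[OF assms(3,4,1,2)])
  also have "\<dots> = (\<Sum>\<tau>. \<Sum>a\<in>UNIV. pol s0 a * (\<gamma> ^ \<tau> * Ed P pol w s0 a \<tau>))"
    by (rule suminf_sum[symmetric]) (intro summable_mult Ed_summable[OF assms(3,4,1,2)])
  also have "\<dots> = (\<Sum>\<tau>. \<gamma> ^ \<tau> * (\<Sum>s'\<in>UNIV. s_dist P pol s0 \<tau> s' * (\<Sum>a'\<in>UNIV. pol s' a' * w s' a')))"
  proof (rule suminf_cong)
    fix \<tau>
    have "(\<Sum>a\<in>UNIV. pol s0 a * Ed P pol w s0 a \<tau>) =
      (\<Sum>a\<in>UNIV. \<Sum>s'\<in>UNIV. \<Sum>a'\<in>UNIV. pol s0 a * sa_dist P pol s0 a \<tau> s' a' * w s' a')"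
      unfolding Ed_def by (simp add: sum_distrib_left ac_simps)
    also have "\<dots> = (\<Sum>s'\<in>UNIV. \<Sum>a'\<in>UNIV. \<Sum>a\<in>UNIV. pol s0 a * sa_dist P pol s0 a \<tau> s' a' * w s' a')"
      by (rule sum_swap3)
    also have "\<dots> = (\<Sum>s'\<in>UNIV. \<Sum>a'\<in>UNIV. (\<Sum>a\<in>UNIV. pol s0 a * sa_dist P pol s0 a \<tau> s' a') * w s' a')"
      by (simp add: sum_distrib_right)
    also have "\<dots> = (\<Sum>s'\<in>UNIV. s_dist P pol s0 \<tau> s' * (\<Sum>a'\<in>UNIV. pol s' a' * w s' a'))"
      by (simp add: sa_sd sum_distrib_left ac_simps)
    finally have F: "(\<Sum>a\<in>UNIV. pol s0 a * Ed P pol w s0 a \<tau>) =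
       (\<Sum>s'\<in>UNIV. s_dist P pol s0 \<tau> s' * (\<Sum>a'\<in>UNIV. pol s' a' * w s' a'))" .
    have G: "(\<Sum>a\<in>UNIV. pol s0 a * (\<gamma> ^ \<tau> * Ed P pol w s0 a \<tau>)) = \<gamma> ^ \<tau> * (\<Sum>a\<in>UNIV. pol s0 a * Ed P pol w s0 a \<tau>)"
      by (simp add: sum_distrib_left mult.left_commute)
    show "(\<Sum>a\<in>UNIV. pol s0 a * (\<gamma> ^ \<tau> * Ed P pol w s0 a \<tau>)) =
       \<gamma> ^ \<tau> * (\<Sum>s'\<in>UNIV. s_dist P pol s0 \<tau> s' * (\<Sum>a'\<in>UNIV. pol s' a' * w s' a'))"
      unfolding G F ..
  qed
  finally show ?thesis .
qed

lemma aux2: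
  "(\<Sum>s'\<in>UNIV. s_dist P pol s0 \<tau> s' * (\<Sum>a'\<in>UNIV. pol s' a' * (\<Sum>s1\<in>UNIV. P s' a' s1 * \<phi> s1)))
   = (\<Sum>s1\<in>UNIV. s_dist P pol s0 (Suc \<tau>) s1 * \<phi> s1)"
proof -
  have "(\<Sum>s'\<in>UNIV. s_dist P pol s0 \<tau> s' * (\<Sum>a'\<in>UNIV. pol s' a' * (\<Sum>s1\<in>UNIV. P s' a' s1 * \<phi> s1)))
     = (\<Sum>s'\<in>UNIV. \<Sum>a'\<in>UNIV. \<Sum>s1\<in>UNIV. s_dist P pol s0 \<tau> s' * pol s' a' * P s' a' s1 * \<phi> s1)"
    by (simp add: sum_distrib_left ac_simps)
  also have "\<dots> = (\<Sum>s1\<in>UNIV. \<Sum>s'\<in>UNIV. \<Sum>a'\<in>UNIV. s_dist P pol s0 \<tau> s' * pol s' a' * P s' a' s1 * \<phi> s1)"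
    by (rule sum_swap3[symmetric])
  also have "\<dots> = (\<Sum>s1\<in>UNIV. s_dist P pol s0 (Suc \<tau>) s1 * \<phi> s1)"
    by (simp add: sum_distrib_right)
  finally show ?thesis .
qed


lemma PG_identity:
  assumes kP: "is_kernel P" and pp: "is_policy pol" and g0: "0 \<le> \<gamma>" and g1: "\<gamma> < 1"
  shows "(\<Sum>s\<in>UNIV. \<rho> s * (\<Sum>a\<in>UNIV. pol s a * (\<gamma> * Qf P \<gamma> pol (\<lambda>x y. Tq P Dh q x y) s a) + Dh s a * q s a))
       = (\<Sum>s\<in>UNIV. visit P \<gamma> \<rho> pol s / (1 - \<gamma>) * (\<Sum>a\<in>UNIV. q s a * Dh s a))"
proof -
  define \<phi> where "\<phi> s = (\<Sum>a\<in>UNIV. Dh s a * q s a)" for s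
  define E where "E s0 \<tau> = (\<Sum>s\<in>UNIV. s_dist P pol s0 \<tau> s * \<phi> s)" for s0 \<tau>
  have Tq\<phi>: "Tq P Dh q x y = (\<Sum>s1\<in>UNIV. P x y s1 * \<phi> s1)" for x y
    unfolding Tq_def \<phi>_def ..
  have Esum: "summable (\<lambda>\<tau>. \<gamma> ^ \<tau> * E s0 \<tau>)" for s0
    by (rule geo_summable[OF g0 g1, where B="\<Sum>s'\<in>UNIV. \<bar>\<phi> s'\<bar>"])
       (unfold E_def, intro allI sd_phi_bound[OF kP pp])
  have Esum': "summable (\<lambda>\<tau>. \<gamma> ^ \<tau> * E s0 (Suc \<tau>))" for s0
    by (rule geo_summable[OF g0 g1, where B="\<Sum>s'\<in>UNIV. \<bar>\<phi> s'\<bar>"])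
       (unfold E_def, intro allI sd_phi_bound[OF kP pp])
  have A: "(\<Sum>a\<in>UNIV. pol s0 a * Qf P \<gamma> pol (\<lambda>x y. Tq P Dh q x y) s0 a) = (\<Sum>\<tau>. \<gamma> ^ \<tau> * E s0 (Suc \<tau>))" for s0
    unfolding aux1[OF kP pp g0 g1] Tq\<phi> aux2 E_def ..
  have B: "(\<Sum>\<tau>. \<gamma> ^ \<tau> * E s0 \<tau>) = \<phi> s0 + \<gamma> * (\<Sum>\<tau>. \<gamma> ^ \<tau> * E s0 (Suc \<tau>))" for s0
  proof -
    have "(\<Sum>\<tau>. \<gamma> ^ Suc \<tau> * E s0 (Suc \<tau>)) = (\<Sum>\<tau>. \<gamma> ^ \<tau> * E s0 \<tau>) - \<gamma> ^ 0 * E s0 0"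
      by (rule suminf_split_head[OF Esum])
    moreover have "E s0 0 = (\<Sum>s\<in>UNIV. if s = s0 then \<phi> s else 0)" unfolding E_def by (intro sum.cong) auto
    then have "E s0 0 = \<phi> s0" by (simp add: sum.delta')
    moreover have "(\<Sum>\<tau>. \<gamma> ^ Suc \<tau> * E s0 (Suc \<tau>)) = \<gamma> * (\<Sum>\<tau>. \<gamma> ^ \<tau> * E s0 (Suc \<tau>))"
      by (subst suminf_mult[OF Esum', symmetric]) (simp add: mult.assoc)
    ultimately show ?thesis by simp
  qed
  have sdsum: "summable (\<lambda>\<tau>. \<gamma> ^ \<tau> * s_dist P pol s0 \<tau> s)" for s0 s
    by (rule geo_summable[OF g0 g1, where B=1])
       (use sd_nonneg[OF kP pp] sd_le1[OF kP pp] in \<open>simp add: abs_of_nonneg\<close>)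
  have V: "visit P \<gamma> \<rho> pol s / (1 - \<gamma>) = (\<Sum>s0\<in>UNIV. \<rho> s0 * (\<Sum>\<tau>. \<gamma> ^ \<tau> * s_dist P pol s0 \<tau> s))" for s
    unfolding visit_def using g1 by simp
  have C: "(\<Sum>s\<in>UNIV. visit P \<gamma> \<rho> pol s / (1 - \<gamma>) * (\<Sum>a\<in>UNIV. q s a * Dh s a))
      = (\<Sum>s0\<in>UNIV. \<rho> s0 * (\<Sum>\<tau>. \<gamma> ^ \<tau> * E s0 \<tau>))"
  proof -
    have "(\<Sum>s\<in>UNIV. visit P \<gamma> \<rho> pol s / (1 - \<gamma>) * (\<Sum>a\<in>UNIV. q s a * Dh s a))
       = (\<Sum>s\<in>UNIV. \<Sum>s0\<in>UNIV. \<rho> s0 * ((\<Sum>\<tau>. \<gamma> ^ \<tau> * s_dist P pol s0 \<tau> s) * \<phi> s))"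
    proof -
      have "(\<Sum>a\<in>UNIV. q s a * Dh s a) = \<phi> s" for s by (simp add: \<phi>_def mult.commute)
      then show ?thesis unfolding V by (simp add: sum_distrib_right mult.assoc)
    qed
    also have "\<dots> = (\<Sum>s0\<in>UNIV. \<Sum>s\<in>UNIV. \<rho> s0 * ((\<Sum>\<tau>. \<gamma> ^ \<tau> * s_dist P pol s0 \<tau> s) * \<phi> s))"
      by (rule sum.swap)
    also have "\<dots> = (\<Sum>s0\<in>UNIV. \<rho> s0 * (\<Sum>\<tau>. \<gamma> ^ \<tau> * E s0 \<tau>))"
    proof (rule sum.cong[OF refl])
      fix s0
      have "(\<Sum>s\<in>UNIV. (\<Sum>\<tau>. \<gamma> ^ \<tau> * s_dist P pol s0 \<tau> s) * \<phi> s) = (\<Sum>s\<in>UNIV. \<Sum>\<tau>. \<gamma> ^ \<tau> * s_dist P pol s0 \<tau> s * \<phi> s)"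
        by (intro sum.cong refl suminf_mult2 sdsum)
      also have "\<dots> = (\<Sum>\<tau>. \<Sum>s\<in>UNIV. \<gamma> ^ \<tau> * s_dist P pol s0 \<tau> s * \<phi> s)"
        by (rule suminf_sum[symmetric]) (intro summable_mult2 sdsum)
      also have "\<dots> = (\<Sum>\<tau>. \<gamma> ^ \<tau> * E s0 \<tau>)"
        unfolding E_def by (simp add: sum_distrib_left mult.assoc)
      finally show "(\<Sum>s\<in>UNIV. \<rho> s0 * ((\<Sum>\<tau>. \<gamma> ^ \<tau> * s_dist P pol s0 \<tau> s) * \<phi> s)) = \<rho> s0 * (\<Sum>\<tau>. \<gamma> ^ \<tau> * E s0 \<tau>)"
        by (simp add: sum_distrib_left[symmetric])
    qed
    finally show ?thesis .
  qed
  have L: "(\<Sum>a\<in>UNIV. pol s a * (\<gamma> * Qf P \<gamma> pol (\<lambda>x y. Tq P Dh q x y) s a) + Dh s a * q s a)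
      = \<gamma> * (\<Sum>a\<in>UNIV. pol s a * Qf P \<gamma> pol (\<lambda>x y. Tq P Dh q x y) s a) + \<phi> s" for s
    unfolding \<phi>_def by (simp add: sum.distrib sum_distrib_left mult.left_commute)
  show ?thesis unfolding C L A B by (simp add: add.commute)
qed


lemma lin_comb:
  "(\<Sum>s\<in>UNIV. w s * (\<Sum>a\<in>UNIV. (\<Sum>k\<in>K. cf k * Q k s a) * (d s a :: real))) =
   (\<Sum>k\<in>K. cf k * (\<Sum>s\<in>UNIV. w s * (\<Sum>a\<in>UNIV. Q k s a * d s a)))"
proof -
  have "(\<Sum>s\<in>UNIV. w s * (\<Sum>a\<in>UNIV. (\<Sum>k\<in>K. cf k * Q k s a) * d s a)) =
     (\<Sum>s\<in>UNIV. \<Sum>a\<in>UNIV. \<Sum>k\<in>K. cf k * (w s * (Q k s a * d s a)))"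
    by (simp only: sum_distrib_left sum_distrib_right mult.assoc mult.left_commute)
  also have "\<dots> = (\<Sum>k\<in>K. \<Sum>s\<in>UNIV. \<Sum>a\<in>UNIV. cf k * (w s * (Q k s a * d s a)))"
    by (rule sum_swap3[symmetric])
  also have "\<dots> = (\<Sum>k\<in>K. cf k * (\<Sum>s\<in>UNIV. w s * (\<Sum>a\<in>UNIV. Q k s a * d s a)))"
    by (simp add: sum_distrib_left)
  finally show ?thesis .
qed

lemma lin2:
  "(\<Sum>s\<in>UNIV. w s * (\<Sum>a\<in>UNIV. (x * A s a + y * B s a) * (d s a :: real))) =
   x * (\<Sum>s\<in>UNIV. w s * (\<Sum>a\<in>UNIV. A s a * d s a)) + y * (\<Sum>s\<in>UNIV. w s * (\<Sum>a\<in>UNIV. B s a * d s a))"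
  by (simp add: algebra_simps sum.distrib sum_distrib_left)

theorem proposition1:
  fixes P :: "'s::finite \<Rightarrow> 'a::finite \<Rightarrow> 's \<Rightarrow> real"
    and \<rho> :: "'s \<Rightarrow> real" and \<gamma> :: real
    and r :: "'s \<Rightarrow> 'a \<Rightarrow> real" and m :: nat
    and c :: "nat \<Rightarrow> 's \<Rightarrow> 'a \<Rightarrow> real" and b :: "nat \<Rightarrow> real"
    and lam :: "nat \<Rightarrow> real" and \<beta> :: real
    and pol :: "'p::euclidean_space \<Rightarrow> 's \<Rightarrow> 'a \<Rightarrow> real"
    and D :: "'p \<Rightarrow> 's \<Rightarrow> 'a \<Rightarrow> 'p \<Rightarrow> real"
  assumes "is_kernel P" and "is_distr \<rho>"
    and "0 \<le> \<gamma>" and "\<gamma> < 1"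
    and "\<forall>s a. 0 \<le> r s a \<and> r s a \<le> 1"
    and "\<forall>i<m. \<forall>s a. 0 \<le> c i s a \<and> c i s a \<le> 1"
    and "\<forall>i<m. 0 \<le> b i"
    and "\<beta> > 0"
    and "\<forall>\<theta>. is_policy (pol \<theta>)"
    and "\<forall>\<theta> s a. ((\<lambda>t. pol t s a) has_derivative D \<theta> s a) (at \<theta>)"
  shows "\<forall>\<theta>. ((\<lambda>t. aug_lagr P \<gamma> \<rho> r m c b \<beta> (pol t) lam) has_derivative
           (\<lambda>h. \<Sum>s\<in>UNIV. visit P \<gamma> \<rho> (pol \<theta>) s / (1 - \<gamma>) *
              (\<Sum>a\<in>UNIV. Qf P \<gamma> (pol \<theta>) (Gam P \<gamma> \<rho> r m c b \<beta> (pol \<theta>) lam) s a * D \<theta> s a h)))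
         (at \<theta>)"
proof (intro allI)
  fix \<theta> :: 'p
  have kP: "is_kernel P" and g0: "0 \<le> \<gamma>" and g1: "\<gamma> < 1" and bpos: "\<beta> > 0"
    and pp: "\<forall>t. is_policy (pol t)" using assms by auto
  have dp: "\<forall>s a. ((\<lambda>t. pol t s a) has_derivative D \<theta> s a) (at \<theta>)" using assms(10) by blast
  define W where "W s = visit P \<gamma> \<rho> (pol \<theta>) s / (1 - \<gamma>)" for s
  define PG where "PG u h = (\<Sum>s\<in>UNIV. W s * (\<Sum>a\<in>UNIV. Qf P \<gamma> (pol \<theta>) u s a * D \<theta> s a h))" for u h
  have dV: "((\<lambda>t. Vrho P \<gamma> \<rho> (pol t) u) has_derivative PG u) (at \<theta>)" for u
  proof -
    have "((\<lambda>t. \<Sum>s\<in>UNIV. \<rho> s * (\<Sum>a\<in>UNIV. pol t s a * Qf P \<gamma> (pol t) u s a)) has_derivative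
      (\<lambda>h. \<Sum>s\<in>UNIV. \<rho> s * (\<Sum>a\<in>UNIV. pol \<theta> s a *
         (\<gamma> * Qf P \<gamma> (pol \<theta>) (\<lambda>x y. Tq P (\<lambda>s1 a1. D \<theta> s1 a1 h) (Qf P \<gamma> (pol \<theta>) u) x y) s a)
         + D \<theta> s a h * Qf P \<gamma> (pol \<theta>) u s a))) (at \<theta>)"
      by (intro has_derivative_sum has_derivative_mult_right has_derivative_mult
          Q_deriv[OF kP g0 g1 pp dp] dp[rule_format])
    also have "(\<lambda>h. \<Sum>s\<in>UNIV. \<rho> s * (\<Sum>a\<in>UNIV. pol \<theta> s a *
         (\<gamma> * Qf P \<gamma> (pol \<theta>) (\<lambda>x y. Tq P (\<lambda>s1 a1. D \<theta> s1 a1 h) (Qf P \<gamma> (pol \<theta>) u) x y) s a)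
         + D \<theta> s a h * Qf P \<gamma> (pol \<theta>) u s a)) = PG u"
      unfolding PG_def W_def by (intro ext PG_identity[OF kP pp[rule_format] g0 g1])
    finally show ?thesis unfolding Vrho_def Vf_def .
  qed
  define M where "M i = min (Vrho P \<gamma> \<rho> (pol \<theta>) (c i) - b i - lam i / \<beta>) 0" for i
  have dmin: "((\<lambda>t. (min (Vrho P \<gamma> \<rho> (pol t) (c i) - b i - lam i / \<beta>) 0)\<^sup>2) has_derivative
      (\<lambda>h. 2 * M i * (PG (c i) h - 0 - 0))) (at \<theta>)" for i
    unfolding M_def
    by (rule has_derivative_compose[where g="\<lambda>y. (min y 0)\<^sup>2", OF _ minsq_deriv])
       (intro has_derivative_diff dV has_derivative_const)
  have dA: "((\<lambda>t. aug_lagr P \<gamma> \<rho> r m c b \<beta> (pol t) lam) has_derivative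
     (\<lambda>h. PG r h + \<beta> / 2 * (\<Sum>i<m. - (2 * M i * (PG (c i) h - 0 - 0)) + 0))) (at \<theta>)"
    unfolding aug_lagr_def
    by (intro has_derivative_add dV has_derivative_mult_right has_derivative_sum has_derivative_minus
        dmin has_derivative_const)
  have Geq: "Gam P \<gamma> \<rho> r m c b \<beta> (pol \<theta>) lam = (\<lambda>s a. 1 * r s a + (- \<beta>) * (\<Sum>i\<in>{..<m}. M i * c i s a))"
    by (simp add: Gam_def M_def fun_eq_iff mult.commute)
  have Qeq: "Qf P \<gamma> (pol \<theta>) (Gam P \<gamma> \<rho> r m c b \<beta> (pol \<theta>) lam) s a =
      1 * Qf P \<gamma> (pol \<theta>) r s a + (- \<beta>) * (\<Sum>i\<in>{..<m}. M i * Qf P \<gamma> (pol \<theta>) (c i) s a)" for s a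
    unfolding Geq Qf_lin2[OF g0 g1 kP pp[rule_format]] Qf_sum[OF g0 g1 kP pp[rule_format]] ..
  have fin: "(\<lambda>h. PG r h + \<beta> / 2 * (\<Sum>i<m. - (2 * M i * (PG (c i) h - 0 - 0)) + 0)) =
     (\<lambda>h. \<Sum>s\<in>UNIV. visit P \<gamma> \<rho> (pol \<theta>) s / (1 - \<gamma>) *
              (\<Sum>a\<in>UNIV. Qf P \<gamma> (pol \<theta>) (Gam P \<gamma> \<rho> r m c b \<beta> (pol \<theta>) lam) s a * D \<theta> s a h))"
  proof (rule ext)
    fix h
    have "(\<Sum>s\<in>UNIV. visit P \<gamma> \<rho> (pol \<theta>) s / (1 - \<gamma>) *
              (\<Sum>a\<in>UNIV. Qf P \<gamma> (pol \<theta>) (Gam P \<gamma> \<rho> r m c b \<beta> (pol \<theta>) lam) s a * D \<theta> s a h))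
       = (\<Sum>s\<in>UNIV. W s * (\<Sum>a\<in>UNIV. (1 * Qf P \<gamma> (pol \<theta>) r s a + (- \<beta>) * (\<Sum>i\<in>{..<m}. M i * Qf P \<gamma> (pol \<theta>) (c i) s a)) * D \<theta> s a h))"
      unfolding Qeq W_def ..
    also have "\<dots> = PG r h - \<beta> * (\<Sum>i\<in>{..<m}. M i * PG (c i) h)"
      unfolding PG_def lin2 lin_comb by simp
    also have "\<dots> = PG r h + \<beta> / 2 * (\<Sum>i<m. - (2 * M i * (PG (c i) h - 0 - 0)) + 0)"
      by (simp add: sum_distrib_left sum_negf algebra_simps)
    finally show "PG r h + \<beta> / 2 * (\<Sum>i<m. - (2 * M i * (PG (c i) h - 0 - 0)) + 0) =
      (\<Sum>s\<in>UNIV. visit P \<gamma> \<rho> (pol \<theta>) s / (1 - \<gamma>) *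
              (\<Sum>a\<in>UNIV. Qf P \<gamma> (pol \<theta>) (Gam P \<gamma> \<rho> r m c b \<beta> (pol \<theta>) lam) s a * D \<theta> s a h))" by simp
  qed
  show "((\<lambda>t. aug_lagr P \<gamma> \<rho> r m c b \<beta> (pol t) lam) has_derivative
           (\<lambda>h. \<Sum>s\<in>UNIV. visit P \<gamma> \<rho> (pol \<theta>) s / (1 - \<gamma>) *
              (\<Sum>a\<in>UNIV. Qf P \<gamma> (pol \<theta>) (Gam P \<gamma> \<rho> r m c b \<beta> (pol \<theta>) lam) s a * D \<theta> s a h)))
         (at \<theta>)"
    using dA unfolding fin .
qed

end
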